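(* (Fusion Theorem) For positive integers $\lambda,t,m,s,v$ with $2\le t\le ms$, $$OCAN_{\lambda}(t,m,s,v)\le OCAN_{\lambda}(t,m,s,v+1)-2.$$
   Context: For positive integers $m,s$, the RT poset $[m\times s]$ is the set $\{1,\ldots,ms\}$ partitioned into $m$ blocks $B_i=\{is+1,\ldots,(i+1)s\}$ ($i=0,\ldots,m-1$); each block is a chain under the usual order of the integers, and elements of different blocks are incomparable. An anti-ideal is the complement of an ideal (a down-closed set). Given an $N\times n$ array over an alphabet $V$ of size $v$, a set of $t$ columns is $\lambda$-covered if in the $N\times t$ subarray formed by those columns every $t$-tuple over $V$ appears as a row at least $\lambda$ times. For positive integers with $2\le t\le ms$, an ordered covering array $OCA_{\lambda}(N;t,m,s,v)$ is an $N\times ms$ array over an alphabet of size $v$ with columns labeled by the elements of $[m\times s]$ such that for every anti-ideal $J$ of size $t$ the set of columns labeled by $J$ is $\lambda$-covered; $OCAN_{\lambda}(t,m,s,v)$ is the smallest $N$ for which an $OCA_{\lambda}(N;t,m,s,v)$ exists. *)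

theory Defs
  imports Main
begin

text \<open>The RT poset [m x s]: ground set {1..m*s}; element x lies in block (x-1) div s;
  x is below y iff they lie in the same block and x \<le> y as integers.\<close>

definition rt_le :: "nat \<Rightarrow> nat \<Rightarrow> nat \<Rightarrow> bool" where
  "rt_le s x y \<longleftrightarrow> (x - 1) div s = (y - 1) div s \<and> x \<le> y"

definition rt_ideal :: "nat \<Rightarrow> nat \<Rightarrow> nat set \<Rightarrow> bool" where
  "rt_ideal m s I \<longleftrightarrow> I \<subseteq> {1..m*s} \<and>
     (\<forall>x\<in>I. \<forall>y\<in>{1..m*s}. rt_le s y x \<longrightarrow> y \<in> I)"

definition rt_anti_ideal :: "nat \<Rightarrow> nat \<Rightarrow> nat set \<Rightarrow> bool" where
  "rt_anti_ideal m s J \<longleftrightarrow> J \<subseteq> {1..m*s} \<and> rt_ideal m s ({1..m*s} - J)"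

text \<open>An N x n array over the alphabet V = {0..<v} is modelled as A :: nat => nat => nat,
  A r c being the entry in row r < N and column c.\<close>
definition lambda_covered :: "nat \<Rightarrow> nat \<Rightarrow> nat \<Rightarrow> (nat \<Rightarrow> nat \<Rightarrow> nat) \<Rightarrow> nat set \<Rightarrow> bool" where
  "lambda_covered lam N v A J \<longleftrightarrow>
     (\<forall>f. (\<forall>c\<in>J. f c < v) \<longrightarrow> card {r. r < N \<and> (\<forall>c\<in>J. A r c = f c)} \<ge> lam)"

definition is_OCA :: "nat \<Rightarrow> nat \<Rightarrow> nat \<Rightarrow> nat \<Rightarrow> nat \<Rightarrow> nat \<Rightarrow> (nat \<Rightarrow> nat \<Rightarrow> nat) \<Rightarrow> bool" where
  "is_OCA lam N t m s v A \<longleftrightarrow>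
     (\<forall>r<N. \<forall>c\<in>{1..m*s}. A r c < v) \<and>
     (\<forall>J. rt_anti_ideal m s J \<and> card J = t \<longrightarrow> lambda_covered lam N v A J)"

definition OCAN :: "nat \<Rightarrow> nat \<Rightarrow> nat \<Rightarrow> nat \<Rightarrow> nat \<Rightarrow> nat" where
  "OCAN lam t m s v = (LEAST N. \<exists>A. is_OCA lam N t m s v A)"

end

theory Submission
  imports Defs "HOL-Library.FuncSet"
begin

lemma exists_OCA:
  fixes lam t m s w :: nat
  assumes "w > 0"
  shows "\<exists>N A. is_OCA lam N t m s w A"
proof -
  define F where "F = (\<Pi>\<^sub>E c \<in> {1..m*s}. {..<w})"
  have finF: "finite F" unfolding F_def by (rule finite_PiE) auto
  obtain h where h: "bij_betw h {0..<card F} F" using ex_bij_betw_nat_finite[OF finF] by blast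
  define K where "K = card F"
  define A where "A = (\<lambda>r c. h (r mod K) c)"
  have Fne: "(\<lambda>c\<in>{1..m*s}. 0) \<in> F" unfolding F_def using assms by auto
  hence Kpos: "K > 0" unfolding K_def using finF card_gt_0_iff by blast
  have "is_OCA lam (lam*K) t m s w A"
    unfolding is_OCA_def
  proof (intro conjI allI impI ballI)
    fix r c assume "r < lam*K" "c \<in> {1..m*s}"
    have "r mod K < K" using Kpos by simp
    hence "h (r mod K) \<in> F" using h unfolding K_def bij_betw_def by auto
    thus "A r c < w" using \<open>c \<in> {1..m*s}\<close> unfolding A_def F_def by auto
  next
    fix J assume J: "rt_anti_ideal m s J \<and> card J = t"
    hence Jsub: "J \<subseteq> {1..m*s}" unfolding rt_anti_ideal_def by auto
    show "lambda_covered lam (lam*K) w A J"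
      unfolding lambda_covered_def
    proof (intro allI impI)
      fix f assume f: "\<forall>c\<in>J. f c < w"
      define H where "H = (\<lambda>c\<in>{1..m*s}. if c \<in> J then f c else 0)"
      have HF: "H \<in> F" unfolding H_def F_def using f assms by auto
      define i where "i = inv_into {0..<K} h H"
      have HI: "H \<in> h ` {0..<K}" using h HF unfolding K_def bij_betw_def by auto
      have hi: "h i = H" "i < K" unfolding i_def
        using f_inv_into_f[OF HI] inv_into_into[OF HI] by auto
      have sub: "(\<lambda>q. q*K + i) ` {..<lam} \<subseteq> {r. r < lam*K \<and> (\<forall>c\<in>J. A r c = f c)}"
      proof
        fix r assume "r \<in> (\<lambda>q. q*K + i) ` {..<lam}"
        then obtain q where q: "q < lam" "r = q*K + i" by auto
        have "r < lam*K"
        proof -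
          have "r < q*K + K" using q hi by simp
          also have "\<dots> = (q+1)*K" by simp
          also have "\<dots> \<le> lam*K" using q by (intro mult_right_mono) auto
          finally show ?thesis .
        qed
        moreover have "r mod K = i" using q hi by simp
        ultimately show "r \<in> {r. r < lam*K \<and> (\<forall>c\<in>J. A r c = f c)}"
          using Jsub hi unfolding A_def H_def by auto
      qed
      have "inj_on (\<lambda>q. q*K + i) {..<lam}" using Kpos by (auto simp: inj_on_def)
      hence eq: "card ((\<lambda>q. q*K + i) ` {..<lam}) = lam" by (simp add: card_image)
      have fin: "finite {r. r < lam*K \<and> (\<forall>c\<in>J. A r c = f c)}" by simp
      show "lam \<le> card {r. r < lam*K \<and> (\<forall>c\<in>J. A r c = f c)}"
        using card_mono[OF fin sub] eq by simp
    qed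
  qed
  thus ?thesis by blast
qed

lemma ne_of_card: "0 < (lam::nat) \<Longrightarrow> lam \<le> card S \<Longrightarrow> S \<noteq> {}" by auto

definition ee :: "nat \<Rightarrow> nat \<Rightarrow> nat" where
  "ee a x = (if x < a then x else x - 1)"

definition lift :: "nat \<Rightarrow> nat \<Rightarrow> nat" where
  "lift a y = (if y < a then y else Suc y)"

definition phi :: "nat \<Rightarrow> nat \<Rightarrow> nat \<Rightarrow> nat" where
  "phi a1 a2 x = (if x = a1 then (if a2 = a1 then 0 else ee a1 a2) else ee a1 x)"

lemma lift_prop: "y < (v::nat) \<Longrightarrow> lift a y \<le> v \<and> lift a y \<noteq> a \<and> phi a b (lift a y) = y"
  unfolding lift_def phi_def ee_def by auto

lemma anti_ideal_top:
  assumes "t \<le> m*s"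
  shows "rt_anti_ideal m s {m*s - t + 1..m*s}"
  using assms unfolding rt_anti_ideal_def rt_ideal_def rt_le_def by auto

lemma fusion_step:
  fixes lam t m s v N :: nat
  assumes "lam > 0" "v > 0" "2 \<le> t" "t \<le> m * s"
    and A: "is_OCA lam N t m s (v+1) A"
  shows "N \<ge> 2 \<and> is_OCA lam (N-2) t m s v (\<lambda>r c. phi (A (N-1) c) (A (N-2) c) (A r c))"
proof -
  have Aval: "\<And>r c. r < N \<Longrightarrow> c \<in> {1..m*s} \<Longrightarrow> A r c < v+1"
    using A unfolding is_OCA_def by blast
  have cov: "\<And>J. rt_anti_ideal m s J \<Longrightarrow> card J = t \<Longrightarrow> lambda_covered lam N (v+1) A J"
    using A unfolding is_OCA_def by blast
  define J0 where "J0 = {m*s - t + 1..m*s}"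
  have J0a: "rt_anti_ideal m s J0" using anti_ideal_top[OF assms(4)] unfolding J0_def .
  have J0b: "card J0 = t" using assms(4) unfolding J0_def by simp
  note J0 = J0a J0b
  have c0in: "m*s \<in> J0" using assms unfolding J0_def by auto
  have N2: "N \<ge> 2"
  proof -
    have L: "lambda_covered lam N (v+1) A J0" using cov J0 by blast
    have "card {r. r < N \<and> (\<forall>c\<in>J0. A r c = 0)} \<ge> lam"
      using spec[OF L[unfolded lambda_covered_def], of "\<lambda>_. 0"] by simp
    hence "{r. r < N \<and> (\<forall>c\<in>J0. A r c = 0)} \<noteq> {}" using assms(1) ne_of_card by blast
    then obtain r0 where r0: "r0 < N" "A r0 (m*s) = 0" using c0in by blast
    have "card {r. r < N \<and> (\<forall>c\<in>J0. A r c = 1)} \<ge> lam"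
      using spec[OF L[unfolded lambda_covered_def], of "\<lambda>_. 1"] assms(2) by simp
    hence "{r. r < N \<and> (\<forall>c\<in>J0. A r c = 1)} \<noteq> {}" using assms(1) ne_of_card by blast
    then obtain r1 where r1: "r1 < N" "A r1 (m*s) = 1" using c0in by blast
    have "r0 \<noteq> r1" using r0 r1 by auto
    show ?thesis
    proof (rule ccontr)
      assume "\<not> N \<ge> 2"
      hence "N \<le> 1" by simp
      hence "r0 = 0" "r1 = 0" using r0(1) r1(1) by auto
      thus False using \<open>r0 \<noteq> r1\<close> by simp
    qed
  qed
  define a1 where "a1 = (\<lambda>c. A (N-1) c)"
  define a2 where "a2 = (\<lambda>c. A (N-2) c)"
  define B where "B = (\<lambda>r c. phi (A (N-1) c) (A (N-2) c) (A r c))"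
  have Bdef: "\<And>r c. B r c = phi (a1 c) (a2 c) (A r c)" unfolding B_def a1_def a2_def by simp
  have a1v: "a1 c \<le> v" if "c \<in> {1..m*s}" for c
  proof -
    have "A (N-1) c < v+1" using Aval[of "N-1" c] N2 that by simp
    thus ?thesis unfolding a1_def by simp
  qed
  have phi_bound: "\<And>a b x. x \<le> v \<Longrightarrow> a \<le> v \<Longrightarrow> b \<le> v \<Longrightarrow> phi a b x < v"
    using assms(2) unfolding phi_def ee_def by auto
  have "is_OCA lam (N-2) t m s v B"
    unfolding is_OCA_def
  proof (intro conjI allI impI ballI)
    fix r c assume rc: "r < N-2" "c \<in> {1..m*s}"
    have "r < N" using rc by linarith
    have "A r c < v+1" using Aval[of r c] \<open>r < N\<close> rc(2) by blast
    hence x1: "A r c \<le> v" by simp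
    have "N-2 < N" using N2 by simp
    hence "A (N-2) c < v+1" using Aval[of "N-2" c] rc(2) by blast
    hence x2: "a2 c \<le> v" unfolding a2_def by simp
    show "B r c < v" unfolding Bdef using phi_bound[OF x1 a1v[OF rc(2)] x2] .
  next
    fix J assume J: "rt_anti_ideal m s J \<and> card J = t"
    hence Jsub: "J \<subseteq> {1..m*s}" unfolding rt_anti_ideal_def by auto
    have finJ: "finite J" using Jsub finite_subset by blast
    have covJ: "lambda_covered lam N (v+1) A J" using cov J by blast
    show "lambda_covered lam (N-2) v B J"
      unfolding lambda_covered_def
    proof (intro allI impI)
      fix f assume f: "\<forall>c\<in>J. f c < v"
      define f' where "f' = (\<lambda>c. lift (a1 c) (f c))"
      have f'p: "f' c \<le> v \<and> f' c \<noteq> a1 c \<and> phi (a1 c) (a2 c) (f' c) = f c" if "c \<in> J" for c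
        unfolding f'_def using lift_prop[of "f c" v "a1 c" "a2 c"] f that by blast
      define T where "T = {r. r < N-2 \<and> (\<forall>c\<in>J. B r c = f c)}"
      have finT: "finite T" unfolding T_def by auto
      define S where "S = {r. r < N \<and> (\<forall>c\<in>J. A r c = f' c)}"
      have finS: "finite S" unfolding S_def by auto
      have "\<forall>c\<in>J. f' c < v+1" using f'p by (simp add: less_Suc_eq_le)
      hence cardS: "card S \<ge> lam" using covJ unfolding lambda_covered_def S_def by blast
      have "card J \<ge> 2" using J assms by auto
      hence "J \<noteq> {}" by auto
      then obtain c0 where c0: "c0 \<in> J" by blast
      have "card (J - {c0}) > 0" using \<open>card J \<ge> 2\<close> c0 finJ by simp
      hence "J - {c0} \<noteq> {}" by (metis card.empty less_irrefl)
      then obtain c1 where "c1 \<in> J - {c0}" by blast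
      hence cs: "c0 \<in> J" "c1 \<in> J" "c0 \<noteq> c1" using c0 by auto
      have N1S: "N-1 \<notin> S"
      proof
        assume "N-1 \<in> S"
        hence "A (N-1) c0 = f' c0" using cs(1) unfolding S_def by auto
        thus False using f'p[OF cs(1)] unfolding a1_def by simp
      qed
      show "lam \<le> card T"
      proof (cases "N-2 \<in> S")
        case False
        have "S \<subseteq> T"
        proof
          fix r assume "r \<in> S"
          hence "r \<noteq> N-1" "r \<noteq> N-2" "r < N" using N1S False unfolding S_def by auto
          hence "r < N-2" by linarith
          moreover have "\<forall>c\<in>J. B r c = f c"
          proof
            fix c assume c: "c \<in> J"
            have "A r c = f' c" using \<open>r \<in> S\<close> c unfolding S_def by simp
            thus "B r c = f c" using f'p[OF c] unfolding Bdef by simp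
          qed
          ultimately show "r \<in> T" unfolding T_def by simp
        qed
        thus ?thesis using cardS card_mono[OF finT] by (meson le_trans)
      next
        case True
        have a2all: "\<forall>c\<in>J. A (N-2) c = f' c" using True unfolding S_def by simp
        have a2c: "a2 c = f' c" if "c \<in> J" for c using a2all that unfolding a2_def by blast
        define g where "g = f'(c0 := a1 c0)"
        define S' where "S' = {r. r < N \<and> (\<forall>c\<in>J. A r c = g c)}"
        have finS': "finite S'" unfolding S'_def by auto
        have gv: "\<forall>c\<in>J. g c < v+1"
        proof
          fix c assume c: "c \<in> J"
          show "g c < v+1"
          proof (cases "c = c0")
            case True thus ?thesis using a1v[of c0] Jsub c unfolding g_def by auto
          next
            case False thus ?thesis using f'p[OF c] unfolding g_def by simp
          qed
        qed
        have cardS': "card S' \<ge> lam" using covJ gv unfolding lambda_covered_def S'_def by blast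
        have disj: "S \<inter> S' = {}"
        proof (intro equalityI subsetI)
          fix r assume "r \<in> S \<inter> S'"
          hence "A r c0 = f' c0" "A r c0 = a1 c0" using cs(1) unfolding S_def S'_def g_def by auto
          thus "r \<in> {}" using f'p[OF cs(1)] by simp
        qed simp
        have N1S': "N-1 \<notin> S'"
        proof
          assume "N-1 \<in> S'"
          hence "A (N-1) c1 = g c1" using cs(2) unfolding S'_def by auto
          hence "A (N-1) c1 = f' c1" using cs(3) unfolding g_def by simp
          thus False using f'p[OF cs(2)] unfolding a1_def by simp
        qed
        have N2S': "N-2 \<notin> S'" using True disj by blast
        have sub: "(S - {N-2}) \<union> S' \<subseteq> T"
        proof
          fix r assume r: "r \<in> (S - {N-2}) \<union> S'"
          hence "r \<noteq> N-1" "r \<noteq> N-2" "r < N" using N1S N1S' N2S' unfolding S_def S'_def by auto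
          hence rl: "r < N-2" by linarith
          show "r \<in> T"
          proof (cases "r \<in> S")
            case True
            have "\<forall>c\<in>J. B r c = f c"
            proof
              fix c assume c: "c \<in> J"
              have "A r c = f' c" using True c unfolding S_def by simp
              thus "B r c = f c" using f'p[OF c] unfolding Bdef by simp
            qed
            thus ?thesis using rl unfolding T_def by simp
          next
            case False
            hence rS': "r \<in> S'" using r by auto
            have "\<forall>c\<in>J. B r c = f c"
            proof
              fix c assume c: "c \<in> J"
              show "B r c = f c"
              proof (cases "c = c0")
                case True
                have "A r c = a1 c" using rS' c True unfolding S'_def g_def by auto
                moreover have "a2 c \<noteq> a1 c" using a2c f'p c by auto
                ultimately have "B r c = phi (a1 c) (a2 c) (a2 c)" unfolding Bdef phi_def by simp
                also have "\<dots> = f c" using a2c f'p c by auto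
                finally show ?thesis .
              next
                case False
                have "A r c = f' c" using rS' c False unfolding S'_def g_def by auto
                thus ?thesis using f'p c unfolding Bdef by auto
              qed
            qed
            thus ?thesis using rl unfolding T_def by auto
          qed
        qed
        have "card ((S - {N-2}) \<union> S') = card (S - {N-2}) + card S'"
          using disj finS finS' by (intro card_Un_disjoint) auto
        also have "card (S - {N-2}) = card S - 1" using True finS by simp
        finally have "card ((S - {N-2}) \<union> S') \<ge> lam" using cardS cardS' assms(1) by linarith
        thus ?thesis using card_mono[OF finT sub] by linarith
      qed
    qed
  qed
  thus ?thesis using N2 unfolding B_def by blast
qed

theorem theorem1:
  fixes lam t m s v :: nat
  assumes "lam > 0" "m > 0" "s > 0" "v > 0" "2 \<le> t" "t \<le> m * s"
  shows "OCAN lam t m s v \<le> OCAN lam t m s (v + 1) - 2"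
proof -
  have ex: "\<exists>N A. is_OCA lam N t m s (v+1) A" using exists_OCA[of "v+1" lam t m s] by simp
  have "\<exists>A. is_OCA lam (LEAST N. \<exists>A. is_OCA lam N t m s (v+1) A) t m s (v+1) A"
    by (rule LeastI_ex[OF ex])
  hence "\<exists>A. is_OCA lam (OCAN lam t m s (v+1)) t m s (v+1) A" unfolding OCAN_def .
  then obtain A where A: "is_OCA lam (OCAN lam t m s (v+1)) t m s (v+1) A" by blast
  from fusion_step[OF assms(1,4,5,6) A]
  have "\<exists>B. is_OCA lam (OCAN lam t m s (v+1) - 2) t m s v B" by blast
  thus ?thesis unfolding OCAN_def by (rule Least_le)
qed

end
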